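(* Let $R$ be a commutative noetherian ring. The subcategory of finitely weakly Laskerian $R$-modules satisfies the condition $C_{\mathfrak a}$ for every ideal $\mathfrak a$ of $R$.
   Context: An $R$-module $M$ is finitely weakly Laskerian if $\mathrm{Ass}_R(M/K)$ is finite for every finitely generated submodule $K$ of $M$. A subcategory $\mathcal S$ of $R$-modules satisfies the condition $C_{\mathfrak a}$ if for every $R$-module $M$: whenever $\Gamma_{\mathfrak a}(M)=M$ and $(0:_M\mathfrak a)\in\mathcal S$, then $M\in\mathcal S$. *)

theory Defs
  imports "HOL-Algebra.Module" "HOL-Algebra.Ideal_Product" "HOL-Algebra.Ring_Divisibility"
begin

definition ideal_pow :: "('a, 'c) ring_scheme \<Rightarrow> 'a set \<Rightarrow> nat \<Rightarrow> 'a set" where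
  "ideal_pow R I n = I [^]\<^bsub>ideals_set R\<^esub> n"

definition ann_elem :: "('a, 'c) ring_scheme \<Rightarrow> ('a, 'b) module \<Rightarrow> 'b \<Rightarrow> 'a set" where
  "ann_elem R M x = {r \<in> carrier R. r \<odot>\<^bsub>M\<^esub> x = \<zero>\<^bsub>M\<^esub>}"

definition Ass :: "('a, 'c) ring_scheme \<Rightarrow> ('a, 'b) module \<Rightarrow> 'a set set" where
  "Ass R M = {P. primeideal P R \<and> (\<exists>x \<in> carrier M. P = ann_elem R M x)}"

definition gen_submodule :: "('a, 'c) ring_scheme \<Rightarrow> ('a, 'b) module \<Rightarrow> 'b set \<Rightarrow> 'b set" where
  "gen_submodule R M S = \<Inter>{N. submodule N R M \<and> S \<subseteq> N}"

definition fg_submodule :: "('a, 'c) ring_scheme \<Rightarrow> ('a, 'b) module \<Rightarrow> 'b set \<Rightarrow> bool" where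
  "fg_submodule R M K \<longleftrightarrow> (\<exists>S. finite S \<and> S \<subseteq> carrier M \<and> K = gen_submodule R M S)"

text \<open>Quotient module M/K: carrier is the set of cosets K + x, with induced operations.
  (The multiplicative fields of the underlying record are irrelevant for modules.)\<close>
definition quotient_module :: "('a, 'c) ring_scheme \<Rightarrow> ('a, 'b) module \<Rightarrow> 'b set \<Rightarrow> ('a, 'b set) module" where
  "quotient_module R M K =
     \<lparr> carrier = a_rcosets\<^bsub>M\<^esub> K, monoid.mult = (\<lambda>A B. undefined), one = undefined,
       zero = K, add = set_add M,
       smult = (\<lambda>r C. K <+>\<^bsub>M\<^esub> ((\<lambda>x. r \<odot>\<^bsub>M\<^esub> x) ` C)) \<rparr>"

definition fin_weakly_laskerian :: "('a, 'c) ring_scheme \<Rightarrow> ('a, 'b) module \<Rightarrow> bool" where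
  "fin_weakly_laskerian R M \<longleftrightarrow>
     (\<forall>K. fg_submodule R M K \<longrightarrow> finite (Ass R (quotient_module R M K)))"

definition torsion :: "('a, 'c) ring_scheme \<Rightarrow> ('a, 'b) module \<Rightarrow> 'a set \<Rightarrow> 'b set" where
  "torsion R M I = {x \<in> carrier M. \<exists>n::nat. \<forall>r \<in> ideal_pow R I n. r \<odot>\<^bsub>M\<^esub> x = \<zero>\<^bsub>M\<^esub>}"

definition ann_submodule :: "('a, 'c) ring_scheme \<Rightarrow> ('a, 'b) module \<Rightarrow> 'a set \<Rightarrow> 'b set" where
  "ann_submodule R M I = {x \<in> carrier M. \<forall>r \<in> I. r \<odot>\<^bsub>M\<^esub> x = \<zero>\<^bsub>M\<^esub>}"

definition condition_C :: "('a, 'c) ring_scheme \<Rightarrow> 'a set \<Rightarrow> (('a, 'b) module \<Rightarrow> bool) \<Rightarrow> bool" where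
  "condition_C R I S \<longleftrightarrow>
     (\<forall>M. module R M \<longrightarrow> torsion R M I = carrier M \<longrightarrow>
          S (M\<lparr>carrier := ann_submodule R M I\<rparr>) \<longrightarrow> S M)"

end

theory Submission
  imports Defs
begin


definition rcolon :: "('a,'c) ring_scheme \<Rightarrow> 'a set \<Rightarrow> 'a \<Rightarrow> 'a set" where
  "rcolon R J c = {r \<in> carrier R. r \<otimes>\<^bsub>R\<^esub> c \<in> J}"

definition AssR :: "('a,'c) ring_scheme \<Rightarrow> 'a set \<Rightarrow> 'a set set" where
  "AssR R J = {P. primeideal P R \<and> (\<exists>c\<in>carrier R. P = rcolon R J c)}"

context cring begin

lemma ideal_crit:
  assumes "J \<subseteq> carrier R" "\<zero> \<in> J" "\<And>a b. a \<in> J \<Longrightarrow> b \<in> J \<Longrightarrow> a \<oplus> b \<in> J"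
    "\<And>a. a \<in> J \<Longrightarrow> \<ominus> a \<in> J" "\<And>a x. a \<in> J \<Longrightarrow> x \<in> carrier R \<Longrightarrow> x \<otimes> a \<in> J"
  shows "ideal J R"
proof (rule idealI)
  show "ring R" by (rule ring_axioms)
  show "subgroup J (add_monoid R)"
    using assms(1-4) by (intro subgroup.intro) (auto simp: a_inv_def[symmetric])
  show "\<And>a x. a \<in> J \<Longrightarrow> x \<in> carrier R \<Longrightarrow> x \<otimes> a \<in> J" by (rule assms(5))
  show "\<And>a x. a \<in> J \<Longrightarrow> x \<in> carrier R \<Longrightarrow> a \<otimes> x \<in> J"
    using assms(1,5) m_comm by (metis (no_types, lifting) subsetD)
qed

lemma rcolon_ideal:
  assumes J: "ideal J R" and c: "c \<in> carrier R"
  shows "ideal (rcolon R J c) R"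
proof (rule ideal_crit)
  interpret ideal J R by fact
  show "rcolon R J c \<subseteq> carrier R" by (auto simp: rcolon_def)
  show "\<zero> \<in> rcolon R J c" using c by (simp add: rcolon_def)
  show "a \<oplus> b \<in> rcolon R J c" if "a \<in> rcolon R J c" "b \<in> rcolon R J c" for a b
  proof -
    have ab: "a \<in> carrier R" "b \<in> carrier R" "a \<otimes> c \<in> J" "b \<otimes> c \<in> J"
      using that unfolding rcolon_def by auto
    have "(a \<oplus> b) \<otimes> c = a \<otimes> c \<oplus> b \<otimes> c" using ab c by (simp add: l_distr)
    thus ?thesis using ab unfolding rcolon_def by (simp add: a_closed)
  qed
  show "\<ominus> a \<in> rcolon R J c" if "a \<in> rcolon R J c" for a
  proof -
    have ab: "a \<in> carrier R" "a \<otimes> c \<in> J"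
      using that unfolding rcolon_def by auto
    have "(\<ominus> a) \<otimes> c = \<ominus> (a \<otimes> c)" using ab c by (simp add: l_minus)
    thus ?thesis using ab unfolding rcolon_def by (simp add: a_inv_closed)
  qed
  show "x \<otimes> a \<in> rcolon R J c" if "a \<in> rcolon R J c" "x \<in> carrier R" for a x
    using that c by (auto simp: rcolon_def m_assoc I_l_closed)
qed

lemma rcolon_prime_mult:
  assumes P: "primeideal P R" and Pc: "P = rcolon R J c" and c: "c \<in> carrier R"
    and J: "ideal J R" and t: "t \<in> carrier R" "t \<notin> P"
  shows "P = rcolon R J (t \<otimes> c)"
proof (intro equalityI subsetI)
  fix r assume r: "r \<in> P"
  hence r2: "r \<in> carrier R" "r \<otimes> c \<in> J" unfolding Pc rcolon_def by auto
  have "t \<otimes> (r \<otimes> c) \<in> J" using ideal.I_l_closed[OF J r2(2) t(1)] .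
  moreover have "t \<otimes> (r \<otimes> c) = r \<otimes> (t \<otimes> c)"
    using r2(1) t(1) c by (simp add: m_lcomm)
  ultimately show "r \<in> rcolon R J (t \<otimes> c)" using r2 unfolding rcolon_def by simp
next
  fix r assume "r \<in> rcolon R J (t \<otimes> c)"
  hence r: "r \<in> carrier R" "r \<otimes> (t \<otimes> c) \<in> J" unfolding rcolon_def by auto
  hence "(r \<otimes> t) \<otimes> c \<in> J" using t c by (simp add: m_assoc)
  hence "r \<otimes> t \<in> P" using r t unfolding Pc rcolon_def by simp
  thus "r \<in> P" using primeideal.I_prime[OF P r(1) t(1)] t by auto
qed


lemma AssR_carrier: "AssR R (carrier R) = {}"
proof -
  have "rcolon R (carrier R) c = carrier R" if "c \<in> carrier R" for c
    using that unfolding rcolon_def by auto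
  thus ?thesis unfolding AssR_def using primeideal.I_notcarr by fastforce
qed

lemma AssR_prime:
  assumes P: "primeideal J R"
  shows "AssR R J \<subseteq> {J}"
proof
  fix Q assume "Q \<in> AssR R J"
  then obtain c where Q: "primeideal Q R" "c \<in> carrier R" "Q = rcolon R J c"
    unfolding AssR_def by auto
  show "Q \<in> {J}"
  proof (cases "c \<in> J")
    case True
    hence "Q = carrier R" using Q(2,3) primeideal.axioms(1)[OF P] ideal.I_l_closed
      unfolding rcolon_def by fastforce
    thus ?thesis using primeideal.I_notcarr[OF Q(1)] by simp
  next
    case False
    have "Q = J"
    proof (intro equalityI subsetI)
      fix r assume "r \<in> Q"
      hence "r \<in> carrier R" "r \<otimes> c \<in> J" using Q unfolding rcolon_def by auto
      thus "r \<in> J" using primeideal.I_prime[OF P _ Q(2)] False by blast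
    next
      fix r assume r: "r \<in> J"
      hence "r \<otimes> c \<in> J" using ideal.I_r_closed[OF primeideal.axioms(1)[OF P] r Q(2)] by simp
      thus "r \<in> Q" using r Q(3) ideal.Icarr[OF primeideal.axioms(1)[OF P] r] unfolding rcolon_def by auto
    qed
    thus ?thesis by simp
  qed
qed

lemma ideal_add_left_iff:
  assumes J: "ideal J R" and x: "x \<in> J" and y: "y \<in> carrier R"
  shows "x \<oplus> y \<in> J \<longleftrightarrow> y \<in> J"
proof
  have xc: "x \<in> carrier R" using ideal.Icarr[OF J x] .
  assume "x \<oplus> y \<in> J"
  hence "\<ominus> x \<oplus> (x \<oplus> y) \<in> J" using J x
    by (meson additive_subgroup.a_closed additive_subgroup.a_inv_closed ideal.axioms(1))
  moreover have "\<ominus> x \<oplus> (x \<oplus> y) = y" using xc y by (simp add: a_assoc[symmetric] l_neg)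
  ultimately show "y \<in> J" by simp
next
  assume "y \<in> J" thus "x \<oplus> y \<in> J" using J x
    by (meson additive_subgroup.a_closed ideal.axioms(1))
qed

lemma AssR_split:
  assumes J: "ideal J R" and a: "a \<in> carrier R"
  shows "AssR R J \<subseteq> AssR R (set_add R J (PIdl a)) \<union> AssR R (rcolon R J a)"
proof
  fix P assume "P \<in> AssR R J"
  then obtain c where P: "primeideal P R" "c \<in> carrier R" "P = rcolon R J c"
    unfolding AssR_def by auto
  let ?J1 = "set_add R J (PIdl a)"
  show "P \<in> AssR R ?J1 \<union> AssR R (rcolon R J a)"
  proof (cases "\<exists>t\<in>carrier R. t \<notin> P \<and> t \<otimes> c \<in> ?J1")
    case True
    then obtain t where t: "t \<in> carrier R" "t \<notin> P" "t \<otimes> c \<in> ?J1" by blast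
    then obtain j d where jd: "j \<in> J" "d \<in> carrier R" "t \<otimes> c = j \<oplus> d \<otimes> a"
      unfolding set_add_def' cgenideal_def by auto
    have jc: "j \<in> carrier R" using ideal.Icarr[OF J jd(1)] .
    have P2: "P = rcolon R J (t \<otimes> c)" using rcolon_prime_mult[OF P(1,3,2) J t(1,2)] .
    have "rcolon R J (t \<otimes> c) = rcolon R (rcolon R J a) d"
    proof (intro equalityI subsetI)
      fix r assume "r \<in> rcolon R J (t \<otimes> c)"
      hence r: "r \<in> carrier R" "r \<otimes> (j \<oplus> d \<otimes> a) \<in> J" unfolding rcolon_def jd(3) by auto
      have e: "r \<otimes> (j \<oplus> d \<otimes> a) = r \<otimes> j \<oplus> (r \<otimes> d) \<otimes> a"
        using r(1) jc jd(2) a by (simp add: r_distr m_assoc)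
      have "r \<otimes> j \<in> J" using ideal.I_l_closed[OF J jd(1) r(1)] .
      hence "(r \<otimes> d) \<otimes> a \<in> J" using ideal_add_left_iff[OF J] r(2) e r(1) jd(2) a by auto
      thus "r \<in> rcolon R (rcolon R J a) d" using r(1) jd(2) unfolding rcolon_def by auto
    next
      fix r assume "r \<in> rcolon R (rcolon R J a) d"
      hence r: "r \<in> carrier R" "(r \<otimes> d) \<otimes> a \<in> J" unfolding rcolon_def by auto
      have e: "r \<otimes> (j \<oplus> d \<otimes> a) = r \<otimes> j \<oplus> (r \<otimes> d) \<otimes> a"
        using r(1) jc jd(2) a by (simp add: r_distr m_assoc)
      have "r \<otimes> j \<in> J" using ideal.I_l_closed[OF J jd(1) r(1)] .
      hence "r \<otimes> (j \<oplus> d \<otimes> a) \<in> J" using ideal_add_left_iff[OF J] r(2) e r(1) jd(2) a by auto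
      thus "r \<in> rcolon R J (t \<otimes> c)" using r(1) unfolding rcolon_def jd(3) by auto
    qed
    hence "P \<in> AssR R (rcolon R J a)" using P(1) P2 jd(2) unfolding AssR_def by auto
    thus ?thesis by simp
  next
    case False
    have "P = rcolon R ?J1 c"
    proof (intro equalityI subsetI)
      fix r assume "r \<in> P"
      hence r: "r \<in> carrier R" "r \<otimes> c \<in> J" using P(3) unfolding rcolon_def by auto
      have "\<zero> \<in> PIdl a" unfolding cgenideal_def using a by (auto intro!: exI[of _ \<zero>])
      hence "r \<otimes> c \<oplus> \<zero> \<in> ?J1" using r unfolding set_add_def' by auto
      thus "r \<in> rcolon R ?J1 c" using r P(2) unfolding rcolon_def by simp
    next
      fix r assume r: "r \<in> rcolon R ?J1 c"
      thus "r \<in> P" using False unfolding rcolon_def by auto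
    qed
    thus ?thesis using P(1,2) unfolding AssR_def by auto
  qed
qed

lemma AssR_finite:
  assumes N: "noetherian_ring R" and J: "ideal J R"
  shows "finite (AssR R J)"
proof (rule ccontr)
  assume inf: "infinite (AssR R J)"
  define \<A> where "\<A> = {J. ideal J R \<and> infinite (AssR R J)}"
  have "\<A> \<noteq> {}" using inf J unfolding \<A>_def by auto
  moreover have "\<Union>\<C> \<in> \<A>" if "\<C> \<noteq> {}" "subset.chain \<A> \<C>" for \<C>
  proof -
    have "subset.chain {I. ideal I R} \<C>" using that(2) unfolding subset_chain_def \<A>_def by auto
    hence "\<Union>\<C> \<in> \<C>" using noetherian_ring.ideal_chain_is_trivial[OF N that(1)] by blast
    thus ?thesis using that(2) unfolding subset_chain_def by auto
  qed
  ultimately obtain M where M: "M \<in> \<A>" "\<And>X. X \<in> \<A> \<Longrightarrow> M \<subseteq> X \<Longrightarrow> X = M"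
    using subset_Zorn_nonempty[of \<A>] by blast
  have MI: "ideal M R" and Minf: "infinite (AssR R M)" using M(1) unfolding \<A>_def by auto
  have fin: "finite (AssR R X)" if "ideal X R" "M \<subseteq> X" "X \<noteq> M" for X
    using M(2)[of X] that unfolding \<A>_def by auto
  have Mne: "M \<noteq> carrier R" using Minf AssR_carrier by auto
  have "\<not> primeideal M R"
  proof
    assume "primeideal M R"
    hence "finite (AssR R M)" using AssR_prime finite_subset by blast
    thus False using Minf by simp
  qed
  then obtain a b where ab: "a \<in> carrier R" "b \<in> carrier R" "a \<otimes> b \<in> M" "a \<notin> M" "b \<notin> M"
    using primeidealI[OF MI is_cring] Mne by blast
  let ?J1 = "set_add R M (PIdl a)"
  have J1: "ideal ?J1 R" using add_ideals[OF MI cgenideal_ideal[OF ab(1)]] .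
  have "M \<subseteq> ?J1"
  proof
    fix x assume x: "x \<in> M"
    have "\<zero> \<in> PIdl a" unfolding cgenideal_def using ab(1) by (auto intro!: exI[of _ \<zero>])
    hence "x \<oplus> \<zero> \<in> ?J1" using x unfolding set_add_def' by auto
    thus "x \<in> ?J1" using ideal.Icarr[OF MI x] by simp
  qed
  moreover have "a \<in> ?J1"
  proof -
    have "\<one> \<otimes> a \<in> PIdl a" unfolding cgenideal_def by auto
    hence "\<zero> \<oplus> \<one> \<otimes> a \<in> ?J1" using additive_subgroup.zero_closed[OF ideal.axioms(1)[OF MI]]
      unfolding set_add_def' by auto
    thus ?thesis using ab(1) by simp
  qed
  ultimately have f1: "finite (AssR R ?J1)" using fin[OF J1] ab(4) by blast
  let ?J2 = "rcolon R M a"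
  have J2: "ideal ?J2 R" using rcolon_ideal[OF MI ab(1)] .
  have "M \<subseteq> ?J2" using ideal.I_r_closed[OF MI _ ab(1)] ideal.Icarr[OF MI]
    unfolding rcolon_def by auto
  moreover have "b \<in> ?J2" using ab m_comm unfolding rcolon_def by auto
  ultimately have f2: "finite (AssR R ?J2)" using fin[OF J2] ab(5) by blast
  have "finite (AssR R M)" using AssR_split[OF MI ab(1)] f1 f2 finite_subset by blast
  thus False using Minf by simp
qed

end


definition colon :: "('a,'c) ring_scheme \<Rightarrow> ('a,'b) module \<Rightarrow> 'b set \<Rightarrow> 'b \<Rightarrow> 'a set" where
  "colon R M U x = {r \<in> carrier R. r \<odot>\<^bsub>M\<^esub> x \<in> U}"

definition AssM :: "('a,'c) ring_scheme \<Rightarrow> ('a,'b) module \<Rightarrow> 'b set \<Rightarrow> 'b set \<Rightarrow> 'a set set" where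
  "AssM R M U W = {P. primeideal P R \<and> (\<exists>x\<in>W. P = colon R M U x)}"

locale mymod = module R M for R :: "('a, 'c) ring_scheme" and M :: "('a, 'b) module"

context mymod begin

lemma sub_zero: "submodule H R M \<Longrightarrow> \<zero>\<^bsub>M\<^esub> \<in> H"
  using submodule.axioms(1) subgroup.one_closed by fastforce

lemma sub_add: "submodule H R M \<Longrightarrow> a \<in> H \<Longrightarrow> b \<in> H \<Longrightarrow> a \<oplus>\<^bsub>M\<^esub> b \<in> H"
  using submoduleE(5) by blast

lemma sub_neg: "submodule H R M \<Longrightarrow> a \<in> H \<Longrightarrow> \<ominus>\<^bsub>M\<^esub> a \<in> H"
  using submoduleE(3) by blast

lemma sub_smult: "submodule H R M \<Longrightarrow> r \<in> carrier R \<Longrightarrow> a \<in> H \<Longrightarrow> r \<odot>\<^bsub>M\<^esub> a \<in> H"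
  using submoduleE(4) by blast

lemma sub_carr: "submodule H R M \<Longrightarrow> H \<subseteq> carrier M"
  using submoduleE(1) by blast

lemma sub_minus: "submodule H R M \<Longrightarrow> a \<in> H \<Longrightarrow> b \<in> H \<Longrightarrow> a \<ominus>\<^bsub>M\<^esub> b \<in> H"
  unfolding a_minus_def using sub_add sub_neg by blast

lemma gen_sub: "S \<subseteq> carrier M \<Longrightarrow> submodule (gen_submodule R M S) R M"
proof (rule submoduleI)
  assume S: "S \<subseteq> carrier M"
  have cm: "carrier M \<in> {N. submodule N R M \<and> S \<subseteq> N}" using carrier_is_submodule S by auto
  show "gen_submodule R M S \<subseteq> carrier M" unfolding gen_submodule_def using cm by blast
  show "\<zero>\<^bsub>M\<^esub> \<in> gen_submodule R M S" unfolding gen_submodule_def using sub_zero by blast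
  show "\<ominus>\<^bsub>M\<^esub> a \<in> gen_submodule R M S" if "a \<in> gen_submodule R M S" for a
    using that sub_neg unfolding gen_submodule_def by blast
  show "a \<oplus>\<^bsub>M\<^esub> b \<in> gen_submodule R M S" if "a \<in> gen_submodule R M S" "b \<in> gen_submodule R M S" for a b
    using that sub_add unfolding gen_submodule_def by blast
  show "a \<odot>\<^bsub>M\<^esub> x \<in> gen_submodule R M S" if "a \<in> carrier R" "x \<in> gen_submodule R M S" for a x
    using that sub_smult unfolding gen_submodule_def by blast
qed

lemma gen_min: "submodule N R M \<Longrightarrow> S \<subseteq> N \<Longrightarrow> gen_submodule R M S \<subseteq> N"
  unfolding gen_submodule_def by blast

lemma gen_incl: "S \<subseteq> gen_submodule R M S"
  unfolding gen_submodule_def by blast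

lemma gen_mono: "S \<subseteq> carrier M \<Longrightarrow> T \<subseteq> S \<Longrightarrow> gen_submodule R M T \<subseteq> gen_submodule R M S"
  using gen_min[OF gen_sub, of S T] gen_incl[of S] by blast

lemma zero_sub: "submodule {\<zero>\<^bsub>M\<^esub>} R M"
  by (rule submoduleI) auto

lemma gen_empty: "gen_submodule R M {} = {\<zero>\<^bsub>M\<^esub>}"
  using gen_min[OF zero_sub, of "{}"] sub_zero[OF gen_sub[of "{}"]] by auto

lemma lin_add:
  assumes "k1 \<in> carrier M" "k2 \<in> carrier M" "s \<in> carrier M" "c1 \<in> carrier R" "c2 \<in> carrier R"
  shows "(k1 \<oplus>\<^bsub>M\<^esub> c1 \<odot>\<^bsub>M\<^esub> s) \<oplus>\<^bsub>M\<^esub> (k2 \<oplus>\<^bsub>M\<^esub> c2 \<odot>\<^bsub>M\<^esub> s)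
       = (k1 \<oplus>\<^bsub>M\<^esub> k2) \<oplus>\<^bsub>M\<^esub> (c1 \<oplus>\<^bsub>R\<^esub> c2) \<odot>\<^bsub>M\<^esub> s"
  using assms by (simp add: smult_l_distr M.a_ac)

lemma lin_neg:
  assumes "k \<in> carrier M" "s \<in> carrier M" "c \<in> carrier R"
  shows "\<ominus>\<^bsub>M\<^esub> (k \<oplus>\<^bsub>M\<^esub> c \<odot>\<^bsub>M\<^esub> s) = (\<ominus>\<^bsub>M\<^esub> k) \<oplus>\<^bsub>M\<^esub> (\<ominus>\<^bsub>R\<^esub> c) \<odot>\<^bsub>M\<^esub> s"
  using assms by (simp add: smult_l_minus M.minus_add)

lemma lin_smult:
  assumes "k \<in> carrier M" "s \<in> carrier M" "c \<in> carrier R" "x \<in> carrier R"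
  shows "x \<odot>\<^bsub>M\<^esub> (k \<oplus>\<^bsub>M\<^esub> c \<odot>\<^bsub>M\<^esub> s) = x \<odot>\<^bsub>M\<^esub> k \<oplus>\<^bsub>M\<^esub> (x \<otimes>\<^bsub>R\<^esub> c) \<odot>\<^bsub>M\<^esub> s"
  using assms by (simp add: smult_r_distr smult_assoc1)

lemma gen_insert:
  assumes S: "S \<subseteq> carrier M" and s: "s \<in> carrier M"
  shows "gen_submodule R M (insert s S) =
    {k \<oplus>\<^bsub>M\<^esub> c \<odot>\<^bsub>M\<^esub> s | k c. k \<in> gen_submodule R M S \<and> c \<in> carrier R}"
    (is "?G = ?W")
proof
  let ?K = "gen_submodule R M S"
  have K: "submodule ?K R M" using gen_sub[OF S] .
  have Kc: "?K \<subseteq> carrier M" using sub_carr[OF K] .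
  have subW: "submodule ?W R M"
  proof (rule submoduleI)
    show "?W \<subseteq> carrier M" using Kc s by auto
    have "\<zero>\<^bsub>M\<^esub> = \<zero>\<^bsub>M\<^esub> \<oplus>\<^bsub>M\<^esub> \<zero>\<^bsub>R\<^esub> \<odot>\<^bsub>M\<^esub> s" using s by simp
    thus "\<zero>\<^bsub>M\<^esub> \<in> ?W" using sub_zero[OF K] by blast
    show "\<ominus>\<^bsub>M\<^esub> a \<in> ?W" if ha: "a \<in> ?W" for a
    proof -
      obtain k c where kc: "k \<in> ?K" "c \<in> carrier R" "a = k \<oplus>\<^bsub>M\<^esub> c \<odot>\<^bsub>M\<^esub> s" using ha by blast
      have "\<ominus>\<^bsub>M\<^esub> a = (\<ominus>\<^bsub>M\<^esub> k) \<oplus>\<^bsub>M\<^esub> (\<ominus>\<^bsub>R\<^esub> c) \<odot>\<^bsub>M\<^esub> s"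
        using lin_neg kc Kc s by blast
      thus ?thesis using sub_neg[OF K kc(1)] kc(2) by blast
    qed
    show "a \<oplus>\<^bsub>M\<^esub> b \<in> ?W" if ha: "a \<in> ?W" "b \<in> ?W" for a b
    proof -
      obtain k c where kc: "k \<in> ?K" "c \<in> carrier R" "a = k \<oplus>\<^bsub>M\<^esub> c \<odot>\<^bsub>M\<^esub> s" using ha by blast
      obtain k' c' where kc': "k' \<in> ?K" "c' \<in> carrier R" "b = k' \<oplus>\<^bsub>M\<^esub> c' \<odot>\<^bsub>M\<^esub> s" using ha by blast
      have "a \<oplus>\<^bsub>M\<^esub> b = (k \<oplus>\<^bsub>M\<^esub> k') \<oplus>\<^bsub>M\<^esub> (c \<oplus>\<^bsub>R\<^esub> c') \<odot>\<^bsub>M\<^esub> s"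
        using lin_add kc kc' Kc s by blast
      thus ?thesis using sub_add[OF K kc(1) kc'(1)] kc(2) kc'(2) by blast
    qed
    show "x \<odot>\<^bsub>M\<^esub> a \<in> ?W" if hx: "x \<in> carrier R" and ha: "a \<in> ?W" for x a
    proof -
      obtain k c where kc: "k \<in> ?K" "c \<in> carrier R" "a = k \<oplus>\<^bsub>M\<^esub> c \<odot>\<^bsub>M\<^esub> s" using ha by blast
      have "x \<odot>\<^bsub>M\<^esub> a = x \<odot>\<^bsub>M\<^esub> k \<oplus>\<^bsub>M\<^esub> (x \<otimes>\<^bsub>R\<^esub> c) \<odot>\<^bsub>M\<^esub> s"
        using lin_smult kc Kc s hx by blast
      thus ?thesis using sub_smult[OF K hx kc(1)] kc(2) hx by blast
    qed
  qed
  have "insert s S \<subseteq> ?W"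
  proof
    fix y assume "y \<in> insert s S"
    then consider "y = s" | "y \<in> S" by blast
    thus "y \<in> ?W"
    proof cases
      case 1
      have "y = \<zero>\<^bsub>M\<^esub> \<oplus>\<^bsub>M\<^esub> \<one>\<^bsub>R\<^esub> \<odot>\<^bsub>M\<^esub> s" using 1 s by simp
      thus ?thesis using sub_zero[OF K] by blast
    next
      case 2
      have "y = y \<oplus>\<^bsub>M\<^esub> \<zero>\<^bsub>R\<^esub> \<odot>\<^bsub>M\<^esub> s" using 2 S s by auto
      thus ?thesis using 2 gen_incl[of S] by blast
    qed
  qed
  thus "?G \<subseteq> ?W" using gen_min[OF subW] by blast
next
  have G: "submodule ?G R M" using gen_sub S s by simp
  have "gen_submodule R M S \<subseteq> ?G" using gen_mono[of "insert s S" S] S s by auto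
  moreover have "s \<in> ?G" using gen_incl by blast
  ultimately show "?W \<subseteq> ?G" using sub_add[OF G] sub_smult[OF G] by blast
qed

end


context mymod begin

lemma minus_plus_cancel: "x \<in> carrier M \<Longrightarrow> y \<in> carrier M \<Longrightarrow> (x \<ominus>\<^bsub>M\<^esub> y) \<oplus>\<^bsub>M\<^esub> y = x"
  by (simp add: a_minus_def M.a_assoc M.l_neg)

lemma pair_ideal:
  assumes W: "submodule W R M" and K: "submodule K0 R M" and s: "s \<in> carrier M"
  shows "ideal {c \<in> carrier R. \<exists>k\<in>K0. k \<oplus>\<^bsub>M\<^esub> c \<odot>\<^bsub>M\<^esub> s \<in> W} R" (is "ideal ?J R")
proof (rule ideal_crit)
  have Kc: "K0 \<subseteq> carrier M" using sub_carr[OF K] .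
  show "?J \<subseteq> carrier R" by auto
  have "\<zero>\<^bsub>M\<^esub> \<oplus>\<^bsub>M\<^esub> \<zero>\<^bsub>R\<^esub> \<odot>\<^bsub>M\<^esub> s \<in> W" using s sub_zero[OF W] by simp
  thus "\<zero>\<^bsub>R\<^esub> \<in> ?J" using sub_zero[OF K] by blast
  show "a \<oplus>\<^bsub>R\<^esub> b \<in> ?J" if ha: "a \<in> ?J" "b \<in> ?J" for a b
  proof -
    obtain k where k: "a \<in> carrier R" "k \<in> K0" "k \<oplus>\<^bsub>M\<^esub> a \<odot>\<^bsub>M\<^esub> s \<in> W" using ha by blast
    obtain k' where k': "b \<in> carrier R" "k' \<in> K0" "k' \<oplus>\<^bsub>M\<^esub> b \<odot>\<^bsub>M\<^esub> s \<in> W" using ha by blast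
    have "(k \<oplus>\<^bsub>M\<^esub> k') \<oplus>\<^bsub>M\<^esub> (a \<oplus>\<^bsub>R\<^esub> b) \<odot>\<^bsub>M\<^esub> s \<in> W"
    proof -
      have kc: "k \<in> carrier M" "k' \<in> carrier M" using k k' Kc by auto
      show ?thesis using sub_add[OF W k(3) k'(3)] lin_add[OF kc s k(1) k'(1)] by simp
    qed
    thus ?thesis using sub_add[OF K k(2) k'(2)] k(1) k'(1) by blast
  qed
  show "\<ominus>\<^bsub>R\<^esub> a \<in> ?J" if ha: "a \<in> ?J" for a
  proof -
    obtain k where k: "a \<in> carrier R" "k \<in> K0" "k \<oplus>\<^bsub>M\<^esub> a \<odot>\<^bsub>M\<^esub> s \<in> W" using ha by blast
    have "(\<ominus>\<^bsub>M\<^esub> k) \<oplus>\<^bsub>M\<^esub> (\<ominus>\<^bsub>R\<^esub> a) \<odot>\<^bsub>M\<^esub> s \<in> W"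
    proof -
      have kc: "k \<in> carrier M" using k Kc by auto
      show ?thesis using sub_neg[OF W k(3)] lin_neg[OF kc s k(1)] by simp
    qed
    thus ?thesis using sub_neg[OF K k(2)] k(1) by blast
  qed
  show "x \<otimes>\<^bsub>R\<^esub> a \<in> ?J" if ha: "a \<in> ?J" and hx: "x \<in> carrier R" for a x
  proof -
    obtain k where k: "a \<in> carrier R" "k \<in> K0" "k \<oplus>\<^bsub>M\<^esub> a \<odot>\<^bsub>M\<^esub> s \<in> W" using ha by blast
    have "x \<odot>\<^bsub>M\<^esub> k \<oplus>\<^bsub>M\<^esub> (x \<otimes>\<^bsub>R\<^esub> a) \<odot>\<^bsub>M\<^esub> s \<in> W"
    proof -
      have kc: "k \<in> carrier M" using k Kc by auto
      show ?thesis using sub_smult[OF W hx k(3)] lin_smult[OF kc s k(1) hx] by simp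
    qed
    thus ?thesis using sub_smult[OF K hx k(2)] k(1) hx by blast
  qed
qed

lemma noeth_sub:
  assumes N: "noetherian_ring R" and S: "finite S" "S \<subseteq> carrier M"
  shows "submodule V R M \<Longrightarrow> V \<subseteq> gen_submodule R M S \<Longrightarrow>
         \<exists>S'. finite S' \<and> S' \<subseteq> V \<and> V = gen_submodule R M S'"
  using S
proof (induction S arbitrary: V rule: finite_induct)
  case empty
  hence "V = {\<zero>\<^bsub>M\<^esub>}" using gen_empty sub_zero[OF empty(1)] by auto
  thus ?case using gen_empty by (intro exI[of _ "{}"]) auto
next
  case (insert s S V)
  let ?K0 = "gen_submodule R M S"
  have Sc: "S \<subseteq> carrier M" and sc: "s \<in> carrier M" using insert by auto
  have K0: "submodule ?K0 R M" using gen_sub[OF Sc] .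
  have K0c: "?K0 \<subseteq> carrier M" using sub_carr[OF K0] .
  have V: "submodule V R M" using insert by simp
  have Vc: "V \<subseteq> carrier M" using sub_carr[OF V] .
  have VK: "submodule (V \<inter> ?K0) R M"
    using V K0 sub_carr[OF V] by (intro submoduleI) (auto intro: sub_zero sub_add sub_neg sub_smult)
  obtain S1 where S1: "finite S1" "S1 \<subseteq> V \<inter> ?K0" "V \<inter> ?K0 = gen_submodule R M S1"
    using insert.IH[OF VK _ Sc] by blast
  define J where "J = {c \<in> carrier R. \<exists>k\<in>?K0. k \<oplus>\<^bsub>M\<^esub> c \<odot>\<^bsub>M\<^esub> s \<in> V}"
  have J: "ideal J R" unfolding J_def using pair_ideal[OF V K0 sc] .
  obtain C where C: "C \<subseteq> carrier R" "finite C" "J = Idl\<^bsub>R\<^esub> C"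
    using noetherian_ring.finetely_gen[OF N J] by blast
  have CJ: "C \<subseteq> J" using C(3) genideal_self[OF C(1)] by simp
  define kf where "kf = (\<lambda>c. SOME k. k \<in> ?K0 \<and> k \<oplus>\<^bsub>M\<^esub> c \<odot>\<^bsub>M\<^esub> s \<in> V)"
  have kf: "kf c \<in> ?K0 \<and> kf c \<oplus>\<^bsub>M\<^esub> c \<odot>\<^bsub>M\<^esub> s \<in> V" if "c \<in> C" for c
  proof -
    have "\<exists>k. k \<in> ?K0 \<and> k \<oplus>\<^bsub>M\<^esub> c \<odot>\<^bsub>M\<^esub> s \<in> V" using CJ that unfolding J_def by blast
    thus ?thesis unfolding kf_def by (rule someI_ex)
  qed
  define T where "T = (\<lambda>c. kf c \<oplus>\<^bsub>M\<^esub> c \<odot>\<^bsub>M\<^esub> s) ` C"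
  have TV: "T \<subseteq> V" unfolding T_def using kf by auto
  have Tc: "T \<subseteq> carrier M" using TV Vc by auto
  have GT: "submodule (gen_submodule R M T) R M" using gen_sub[OF Tc] .
  have GTV: "gen_submodule R M T \<subseteq> V" using gen_min[OF V TV] .
  define J' where "J' = {c \<in> carrier R. \<exists>k\<in>?K0. k \<oplus>\<^bsub>M\<^esub> c \<odot>\<^bsub>M\<^esub> s \<in> gen_submodule R M T}"
  have J': "ideal J' R" unfolding J'_def using pair_ideal[OF GT K0 sc] .
  have "C \<subseteq> J'"
  proof
    fix c assume c: "c \<in> C"
    have "kf c \<oplus>\<^bsub>M\<^esub> c \<odot>\<^bsub>M\<^esub> s \<in> gen_submodule R M T"
      using c gen_incl[of T] unfolding T_def by blast
    thus "c \<in> J'" using kf[OF c] c C(1) unfolding J'_def by blast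
  qed
  hence JJ': "J \<subseteq> J'" using C(3) genideal_minimal[OF J'] by simp
  define S' where "S' = S1 \<union> T"
  have S'c: "S' \<subseteq> carrier M" using S1(2) Vc Tc unfolding S'_def by auto
  have GS': "submodule (gen_submodule R M S') R M" using gen_sub[OF S'c] .
  have "V \<subseteq> gen_submodule R M S'"
  proof
    fix v assume v: "v \<in> V"
    hence "v \<in> gen_submodule R M (insert s S)" using insert by auto
    then obtain k c where kc: "k \<in> ?K0" "c \<in> carrier R" "v = k \<oplus>\<^bsub>M\<^esub> c \<odot>\<^bsub>M\<^esub> s"
      using gen_insert[OF Sc sc] by auto
    have "c \<in> J" using kc v unfolding J_def by blast
    hence "c \<in> J'" using JJ' by auto
    then obtain k' where k': "k' \<in> ?K0" "k' \<oplus>\<^bsub>M\<^esub> c \<odot>\<^bsub>M\<^esub> s \<in> gen_submodule R M T"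
      unfolding J'_def by blast
    let ?w = "k' \<oplus>\<^bsub>M\<^esub> c \<odot>\<^bsub>M\<^esub> s"
    have kcar: "k \<in> carrier M" "k' \<in> carrier M" using kc k' K0c by auto
    have cs: "c \<odot>\<^bsub>M\<^esub> s \<in> carrier M" using kc sc by simp
    have "v \<ominus>\<^bsub>M\<^esub> ?w = k \<ominus>\<^bsub>M\<^esub> k'"
      using kc(3) kcar cs by (simp add: a_minus_def M.minus_add M.a_ac M.r_neg)
    hence d1: "v \<ominus>\<^bsub>M\<^esub> ?w \<in> ?K0" using sub_minus[OF K0 kc(1) k'(1)] by simp
    have wV: "?w \<in> V" using k'(2) GTV by auto
    have d2: "v \<ominus>\<^bsub>M\<^esub> ?w \<in> V" using sub_minus[OF V v wV] .
    have "v \<ominus>\<^bsub>M\<^esub> ?w \<in> gen_submodule R M S1" using d1 d2 S1(3) by auto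
    hence e1: "v \<ominus>\<^bsub>M\<^esub> ?w \<in> gen_submodule R M S'"
      using gen_mono[OF S'c, of S1] unfolding S'_def by auto
    have e2: "?w \<in> gen_submodule R M S'"
      using k'(2) gen_mono[OF S'c, of T] unfolding S'_def by auto
    have "v = (v \<ominus>\<^bsub>M\<^esub> ?w) \<oplus>\<^bsub>M\<^esub> ?w"
    proof -
      have vc: "v \<in> carrier M" and wc: "?w \<in> carrier M" using v wV Vc by auto
      show ?thesis by (simp add: minus_plus_cancel[OF vc wc])
    qed
    thus "v \<in> gen_submodule R M S'" using sub_add[OF GS' e1 e2] by simp
  qed
  moreover have "S' \<subseteq> V" using S1(2) TV unfolding S'_def by auto
  moreover hence "gen_submodule R M S' \<subseteq> V" using gen_min[OF V] by blast
  moreover have "finite S'" using S1(1) C(2) unfolding S'_def T_def by auto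
  ultimately show ?case by blast
qed

end


context mymod begin

lemma sum_sub:
  assumes U: "submodule U R M" and V: "submodule V R M"
  shows "submodule (set_add M U V) R M"
proof (rule submoduleI)
  have Uc: "U \<subseteq> carrier M" and Vc: "V \<subseteq> carrier M" using sub_carr U V by auto
  show "set_add M U V \<subseteq> carrier M" using Uc Vc unfolding set_add_def' by auto
  have "\<zero>\<^bsub>M\<^esub> \<oplus>\<^bsub>M\<^esub> \<zero>\<^bsub>M\<^esub> \<in> set_add M U V" using sub_zero[OF U] sub_zero[OF V] unfolding set_add_def' by blast
  thus "\<zero>\<^bsub>M\<^esub> \<in> set_add M U V" by simp
  show "\<ominus>\<^bsub>M\<^esub> a \<in> set_add M U V" if ha: "a \<in> set_add M U V" for a
  proof -
    obtain u v where uv: "u \<in> U" "v \<in> V" "a = u \<oplus>\<^bsub>M\<^esub> v" using ha unfolding set_add_def' by auto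
    have "\<ominus>\<^bsub>M\<^esub> a = (\<ominus>\<^bsub>M\<^esub> u) \<oplus>\<^bsub>M\<^esub> (\<ominus>\<^bsub>M\<^esub> v)" using uv Uc Vc M.minus_add by (metis subsetD)
    thus ?thesis using sub_neg[OF U uv(1)] sub_neg[OF V uv(2)] unfolding set_add_def' by auto
  qed
  show "a \<oplus>\<^bsub>M\<^esub> b \<in> set_add M U V" if ha: "a \<in> set_add M U V" "b \<in> set_add M U V" for a b
  proof -
    obtain u v where uv: "u \<in> U" "v \<in> V" "a = u \<oplus>\<^bsub>M\<^esub> v" using ha unfolding set_add_def' by auto
    obtain u' v' where uv': "u' \<in> U" "v' \<in> V" "b = u' \<oplus>\<^bsub>M\<^esub> v'" using ha unfolding set_add_def' by auto
    have c: "u \<in> carrier M" "v \<in> carrier M" "u' \<in> carrier M" "v' \<in> carrier M" using uv uv' Uc Vc by auto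
    have "a \<oplus>\<^bsub>M\<^esub> b = (u \<oplus>\<^bsub>M\<^esub> u') \<oplus>\<^bsub>M\<^esub> (v \<oplus>\<^bsub>M\<^esub> v')" using uv(3) uv'(3) c by (simp add: M.a_ac)
    thus ?thesis using sub_add[OF U uv(1) uv'(1)] sub_add[OF V uv(2) uv'(2)] unfolding set_add_def' by auto
  qed
  show "x \<odot>\<^bsub>M\<^esub> a \<in> set_add M U V" if hx: "x \<in> carrier R" and ha: "a \<in> set_add M U V" for x a
  proof -
    obtain u v where uv: "u \<in> U" "v \<in> V" "a = u \<oplus>\<^bsub>M\<^esub> v" using ha unfolding set_add_def' by auto
    have "x \<odot>\<^bsub>M\<^esub> a = x \<odot>\<^bsub>M\<^esub> u \<oplus>\<^bsub>M\<^esub> x \<odot>\<^bsub>M\<^esub> v" using uv Uc Vc hx smult_r_distr by (metis subsetD)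
    thus ?thesis using sub_smult[OF U hx uv(1)] sub_smult[OF V hx uv(2)] unfolding set_add_def' by auto
  qed
qed

lemma sum_left: "submodule V R M \<Longrightarrow> U \<subseteq> carrier M \<Longrightarrow> U \<subseteq> set_add M U V"
proof
  fix u assume V: "submodule V R M" and "U \<subseteq> carrier M" "u \<in> U"
  hence "u \<oplus>\<^bsub>M\<^esub> \<zero>\<^bsub>M\<^esub> \<in> set_add M U V" using sub_zero[OF V] unfolding set_add_def' by auto
  thus "u \<in> set_add M U V" using \<open>U \<subseteq> carrier M\<close> \<open>u \<in> U\<close> by auto
qed

lemma sum_right: "submodule U R M \<Longrightarrow> V \<subseteq> carrier M \<Longrightarrow> V \<subseteq> set_add M U V"
proof
  fix v assume U: "submodule U R M" and "V \<subseteq> carrier M" "v \<in> V"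
  hence "\<zero>\<^bsub>M\<^esub> \<oplus>\<^bsub>M\<^esub> v \<in> set_add M U V" using sub_zero[OF U] unfolding set_add_def' by auto
  thus "v \<in> set_add M U V" using \<open>V \<subseteq> carrier M\<close> \<open>v \<in> V\<close> by auto
qed

lemma col_ideal:
  assumes U: "submodule U R M" and x: "x \<in> carrier M"
  shows "ideal (colon R M U x) R"
proof (rule ideal_crit)
  show "colon R M U x \<subseteq> carrier R" unfolding colon_def by auto
  show "\<zero>\<^bsub>R\<^esub> \<in> colon R M U x" unfolding colon_def using x sub_zero[OF U] by simp
  show "a \<oplus>\<^bsub>R\<^esub> b \<in> colon R M U x" if "a \<in> colon R M U x" "b \<in> colon R M U x" for a b
    using that x sub_add[OF U] unfolding colon_def by (auto simp: smult_l_distr)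
  show "\<ominus>\<^bsub>R\<^esub> a \<in> colon R M U x" if "a \<in> colon R M U x" for a
    using that x sub_neg[OF U] unfolding colon_def by (auto simp: smult_l_minus)
  show "y \<otimes>\<^bsub>R\<^esub> a \<in> colon R M U x" if "a \<in> colon R M U x" "y \<in> carrier R" for a y
    using that x sub_smult[OF U] unfolding colon_def by (auto simp: smult_assoc1)
qed

lemma col_prime_mult:
  assumes P: "primeideal P R" and Pc: "P = colon R M U x" and x: "x \<in> carrier M"
    and U: "submodule U R M" and t: "t \<in> carrier R" "t \<notin> P"
  shows "P = colon R M U (t \<odot>\<^bsub>M\<^esub> x)"
proof (intro equalityI subsetI)
  fix r assume r: "r \<in> P"
  hence r2: "r \<in> carrier R" "r \<odot>\<^bsub>M\<^esub> x \<in> U" unfolding Pc colon_def by auto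
  have "t \<odot>\<^bsub>M\<^esub> (r \<odot>\<^bsub>M\<^esub> x) \<in> U" using sub_smult[OF U t(1) r2(2)] .
  moreover have "t \<odot>\<^bsub>M\<^esub> (r \<odot>\<^bsub>M\<^esub> x) = r \<odot>\<^bsub>M\<^esub> (t \<odot>\<^bsub>M\<^esub> x)"
    using r2(1) t(1) x by (simp add: smult_assoc1[symmetric] R.m_comm)
  ultimately show "r \<in> colon R M U (t \<odot>\<^bsub>M\<^esub> x)" using r2 unfolding colon_def by simp
next
  fix r assume "r \<in> colon R M U (t \<odot>\<^bsub>M\<^esub> x)"
  hence r: "r \<in> carrier R" "r \<odot>\<^bsub>M\<^esub> (t \<odot>\<^bsub>M\<^esub> x) \<in> U" unfolding colon_def by auto
  hence "(r \<otimes>\<^bsub>R\<^esub> t) \<odot>\<^bsub>M\<^esub> x \<in> U" using t x by (simp add: smult_assoc1)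
  hence "r \<otimes>\<^bsub>R\<^esub> t \<in> P" using r t unfolding Pc colon_def by simp
  thus "r \<in> P" using primeideal.I_prime[OF P r(1) t(1)] t by auto
qed

lemma col_split:
  assumes U: "submodule U R M" and V: "submodule V R M" and UV: "U \<subseteq> V"
    and x: "x \<in> carrier M" and P: "primeideal P R" "P = colon R M U x"
  shows "(\<exists>y\<in>V. P = colon R M U y) \<or> P = colon R M V x"
proof (cases "\<exists>t\<in>carrier R. t \<notin> P \<and> t \<odot>\<^bsub>M\<^esub> x \<in> V")
  case True
  then obtain t where t: "t \<in> carrier R" "t \<notin> P" "t \<odot>\<^bsub>M\<^esub> x \<in> V" by blast
  thus ?thesis using col_prime_mult[OF P(1,2) x U t(1,2)] by blast
next
  case False
  have "P = colon R M V x"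
  proof (intro equalityI subsetI)
    fix r assume "r \<in> P" thus "r \<in> colon R M V x" using P(2) UV unfolding colon_def by auto
  next
    fix r assume "r \<in> colon R M V x" thus "r \<in> P" using False unfolding colon_def by auto
  qed
  thus ?thesis by simp
qed

lemma col_shift:
  assumes W: "submodule W R M" and y: "y \<in> W" and z: "z \<in> carrier M"
  shows "colon R M W (y \<oplus>\<^bsub>M\<^esub> z) = colon R M W z"
proof -
  have yc: "y \<in> carrier M" using y sub_carr[OF W] by auto
  have "r \<odot>\<^bsub>M\<^esub> (y \<oplus>\<^bsub>M\<^esub> z) \<in> W \<longleftrightarrow> r \<odot>\<^bsub>M\<^esub> z \<in> W" if r: "r \<in> carrier R" for r
  proof
    have ry: "r \<odot>\<^bsub>M\<^esub> y \<in> W" using sub_smult[OF W r y] .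
    have e: "r \<odot>\<^bsub>M\<^esub> (y \<oplus>\<^bsub>M\<^esub> z) = r \<odot>\<^bsub>M\<^esub> y \<oplus>\<^bsub>M\<^esub> r \<odot>\<^bsub>M\<^esub> z" using r yc z by (simp add: smult_r_distr)
    have ryc: "r \<odot>\<^bsub>M\<^esub> y \<in> carrier M" "r \<odot>\<^bsub>M\<^esub> z \<in> carrier M" using r yc z by auto
    {
      assume "r \<odot>\<^bsub>M\<^esub> (y \<oplus>\<^bsub>M\<^esub> z) \<in> W"
      hence "(\<ominus>\<^bsub>M\<^esub> (r \<odot>\<^bsub>M\<^esub> y)) \<oplus>\<^bsub>M\<^esub> (r \<odot>\<^bsub>M\<^esub> y \<oplus>\<^bsub>M\<^esub> r \<odot>\<^bsub>M\<^esub> z) \<in> W"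
        using e sub_add[OF W sub_neg[OF W ry]] by simp
      moreover have "(\<ominus>\<^bsub>M\<^esub> (r \<odot>\<^bsub>M\<^esub> y)) \<oplus>\<^bsub>M\<^esub> (r \<odot>\<^bsub>M\<^esub> y \<oplus>\<^bsub>M\<^esub> r \<odot>\<^bsub>M\<^esub> z) = r \<odot>\<^bsub>M\<^esub> z"
        using ryc by (simp add: M.a_assoc[symmetric] M.l_neg)
      ultimately show "r \<odot>\<^bsub>M\<^esub> z \<in> W" by simp
    }
    {
      assume "r \<odot>\<^bsub>M\<^esub> z \<in> W"
      thus "r \<odot>\<^bsub>M\<^esub> (y \<oplus>\<^bsub>M\<^esub> z) \<in> W" using e sub_add[OF W ry] by simp
    }
  qed
  thus ?thesis unfolding colon_def by auto
qed

lemma AssM_finite: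
  assumes N: "noetherian_ring R" and U: "submodule U R M"
  shows "finite X \<Longrightarrow> X \<subseteq> carrier M \<Longrightarrow> finite (AssM R M U (set_add M U (gen_submodule R M X)))"
proof (induction X rule: finite_induct)
  case empty
  have Uc: "U \<subseteq> carrier M" using sub_carr[OF U] .
  have "set_add M U {\<zero>\<^bsub>M\<^esub>} = U"
  proof
    show "set_add M U {\<zero>\<^bsub>M\<^esub>} \<subseteq> U" using Uc unfolding set_add_def' by auto
    show "U \<subseteq> set_add M U {\<zero>\<^bsub>M\<^esub>}"
    proof
      fix u assume u: "u \<in> U"
      hence "u \<oplus>\<^bsub>M\<^esub> \<zero>\<^bsub>M\<^esub> \<in> set_add M U {\<zero>\<^bsub>M\<^esub>}" unfolding set_add_def' by blast
      thus "u \<in> set_add M U {\<zero>\<^bsub>M\<^esub>}" using u Uc by auto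
    qed
  qed
  hence e: "set_add M U (gen_submodule R M {}) = U" using gen_empty by simp
  have "AssM R M U U = {}"
  proof -
    have "colon R M U x = carrier R" if "x \<in> U" for x
      using that sub_smult[OF U] unfolding colon_def by auto
    thus ?thesis unfolding AssM_def using primeideal.I_notcarr by fastforce
  qed
  thus ?case using e by simp
next
  case (insert s X)
  have Xc: "X \<subseteq> carrier M" and sc: "s \<in> carrier M" using insert by auto
  let ?W' = "set_add M U (gen_submodule R M X)"
  let ?W = "set_add M U (gen_submodule R M (insert s X))"
  have W': "submodule ?W' R M" using sum_sub[OF U gen_sub[OF Xc]] .
  have UW': "U \<subseteq> ?W'" using sum_left[OF gen_sub[OF Xc] sub_carr[OF U]] .
  have Wc: "?W \<subseteq> carrier M" using sub_carr[OF sum_sub[OF U gen_sub]] Xc sc by auto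
  have J: "ideal (colon R M ?W' s) R" using col_ideal[OF W' sc] .
  have "AssM R M U ?W \<subseteq> AssM R M U ?W' \<union> AssR R (colon R M ?W' s)"
  proof
    fix P assume "P \<in> AssM R M U ?W"
    then obtain x where P: "primeideal P R" "x \<in> ?W" "P = colon R M U x" unfolding AssM_def by auto
    have xc: "x \<in> carrier M" using P(2) Wc by auto
    from col_split[OF U W' UW' xc P(1,3)]
    show "P \<in> AssM R M U ?W' \<union> AssR R (colon R M ?W' s)"
    proof
      assume "\<exists>y\<in>?W'. P = colon R M U y"
      thus ?thesis using P(1) unfolding AssM_def by auto
    next
      assume PW: "P = colon R M ?W' x"
      obtain u g where ug: "u \<in> U" "g \<in> gen_submodule R M (insert s X)" "x = u \<oplus>\<^bsub>M\<^esub> g"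
        using P(2) unfolding set_add_def' by auto
      obtain k c where kc: "k \<in> gen_submodule R M X" "c \<in> carrier R" "g = k \<oplus>\<^bsub>M\<^esub> c \<odot>\<^bsub>M\<^esub> s"
        using ug(2) gen_insert[OF Xc sc] by auto
      have uc: "u \<in> carrier M" "k \<in> carrier M" using ug(1) kc(1) sub_carr[OF U] sub_carr[OF gen_sub[OF Xc]] by auto
      have uk: "u \<oplus>\<^bsub>M\<^esub> k \<in> ?W'" using ug(1) kc(1) unfolding set_add_def' by auto
      have "x = (u \<oplus>\<^bsub>M\<^esub> k) \<oplus>\<^bsub>M\<^esub> c \<odot>\<^bsub>M\<^esub> s" using ug(3) kc(3) uc kc(2) sc by (simp add: M.a_assoc)
      hence "P = colon R M ?W' (c \<odot>\<^bsub>M\<^esub> s)" using PW col_shift[OF W' uk] kc(2) sc by simp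
      also have "\<dots> = rcolon R (colon R M ?W' s) c"
        unfolding colon_def rcolon_def using kc(2) sc by (auto simp: smult_assoc1)
      finally show ?thesis using P(1) kc(2) unfolding AssR_def by auto
    qed
  qed
  moreover have "finite (AssR R (colon R M ?W' s))" using AssR_finite[OF N J] .
  ultimately show ?case using insert.IH[OF Xc] finite_subset by blast
qed

end


context mymod begin

lemma smult_minus: "r \<in> carrier R \<Longrightarrow> x \<in> carrier M \<Longrightarrow> y \<in> carrier M \<Longrightarrow>
  r \<odot>\<^bsub>M\<^esub> (x \<ominus>\<^bsub>M\<^esub> y) = r \<odot>\<^bsub>M\<^esub> x \<ominus>\<^bsub>M\<^esub> r \<odot>\<^bsub>M\<^esub> y"
  by (simp add: a_minus_def smult_r_distr smult_r_minus)

lemma image_sub: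
  assumes Y: "submodule Y R M" and a: "a \<in> carrier R"
  shows "submodule ((\<lambda>y. a \<odot>\<^bsub>M\<^esub> y) ` Y) R M"
proof (rule submoduleI)
  have Yc: "Y \<subseteq> carrier M" using sub_carr[OF Y] .
  show "(\<lambda>y. a \<odot>\<^bsub>M\<^esub> y) ` Y \<subseteq> carrier M" using Yc a by auto
  have "a \<odot>\<^bsub>M\<^esub> \<zero>\<^bsub>M\<^esub> = \<zero>\<^bsub>M\<^esub>" using a by simp
  thus "\<zero>\<^bsub>M\<^esub> \<in> (\<lambda>y. a \<odot>\<^bsub>M\<^esub> y) ` Y" using sub_zero[OF Y] by (metis image_eqI)
  show "\<ominus>\<^bsub>M\<^esub> b \<in> (\<lambda>y. a \<odot>\<^bsub>M\<^esub> y) ` Y" if "b \<in> (\<lambda>y. a \<odot>\<^bsub>M\<^esub> y) ` Y" for b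
  proof -
    obtain y where y: "y \<in> Y" "b = a \<odot>\<^bsub>M\<^esub> y" using \<open>b \<in> _\<close> by blast
    have "\<ominus>\<^bsub>M\<^esub> b = a \<odot>\<^bsub>M\<^esub> (\<ominus>\<^bsub>M\<^esub> y)" using y Yc a smult_r_minus by (metis subsetD)
    thus ?thesis using sub_neg[OF Y y(1)] by blast
  qed
  show "b \<oplus>\<^bsub>M\<^esub> d \<in> (\<lambda>y. a \<odot>\<^bsub>M\<^esub> y) ` Y" if "b \<in> (\<lambda>y. a \<odot>\<^bsub>M\<^esub> y) ` Y" "d \<in> (\<lambda>y. a \<odot>\<^bsub>M\<^esub> y) ` Y" for b d
  proof -
    obtain y where y: "y \<in> Y" "b = a \<odot>\<^bsub>M\<^esub> y" using \<open>b \<in> _\<close> by blast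
    obtain y' where y': "y' \<in> Y" "d = a \<odot>\<^bsub>M\<^esub> y'" using \<open>d \<in> _\<close> by blast
    have "b \<oplus>\<^bsub>M\<^esub> d = a \<odot>\<^bsub>M\<^esub> (y \<oplus>\<^bsub>M\<^esub> y')" using y y' Yc a smult_r_distr by (metis subsetD)
    thus ?thesis using sub_add[OF Y y(1) y'(1)] by blast
  qed
  show "r \<odot>\<^bsub>M\<^esub> b \<in> (\<lambda>y. a \<odot>\<^bsub>M\<^esub> y) ` Y" if "r \<in> carrier R" "b \<in> (\<lambda>y. a \<odot>\<^bsub>M\<^esub> y) ` Y" for r b
  proof -
    obtain y where y: "y \<in> Y" "b = a \<odot>\<^bsub>M\<^esub> y" using \<open>b \<in> _\<close> by blast
    have yc: "y \<in> carrier M" using y Yc by auto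
    have "r \<odot>\<^bsub>M\<^esub> b = a \<odot>\<^bsub>M\<^esub> (r \<odot>\<^bsub>M\<^esub> y)"
      using y(2) yc a \<open>r \<in> carrier R\<close> by (simp add: smult_assoc1[symmetric] R.m_comm)
    thus ?thesis using sub_smult[OF Y \<open>r \<in> carrier R\<close> y(1)] by blast
  qed
qed

lemma ann_approx:
  assumes N: "noetherian_ring R" and K: "submodule K R M" and S: "finite S" "S \<subseteq> carrier M"
    and KS: "K \<subseteq> gen_submodule R M S"
  shows "finite A \<Longrightarrow> A \<subseteq> carrier R \<Longrightarrow> submodule Y R M \<Longrightarrow> (\<forall>y\<in>Y. \<forall>a\<in>A. a \<odot>\<^bsub>M\<^esub> y \<in> K) \<Longrightarrow>
    \<exists>X. finite X \<and> X \<subseteq> Y \<and> (\<forall>y\<in>Y. \<exists>x\<in>gen_submodule R M X. \<forall>a\<in>A. a \<odot>\<^bsub>M\<^esub> (y \<ominus>\<^bsub>M\<^esub> x) = \<zero>\<^bsub>M\<^esub>)"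
proof (induction A arbitrary: Y rule: finite_induct)
  case empty
  show ?case using sub_zero[OF gen_sub[of "{}"]] by (intro exI[of _ "{}"]) auto
next
  case (insert a A Y)
  have a: "a \<in> carrier R" and Ac: "A \<subseteq> carrier R" using insert by auto
  have Y: "submodule Y R M" using insert by simp
  have Yc: "Y \<subseteq> carrier M" using sub_carr[OF Y] .
  let ?aY = "(\<lambda>y. a \<odot>\<^bsub>M\<^esub> y) ` Y"
  have aYK: "?aY \<subseteq> K" using insert(6) by auto
  obtain Z where Z: "finite Z" "Z \<subseteq> ?aY" "?aY = gen_submodule R M Z"
    using noeth_sub[OF N S image_sub[OF Y a]] aYK KS by blast
  obtain X1 where X1: "X1 \<subseteq> Y" "finite X1" "Z = (\<lambda>y. a \<odot>\<^bsub>M\<^esub> y) ` X1"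
    using finite_subset_image[OF Z(1,2)] by blast
  have X1c: "X1 \<subseteq> carrier M" using X1 Yc by auto
  let ?Y' = "{y \<in> Y. a \<odot>\<^bsub>M\<^esub> y = \<zero>\<^bsub>M\<^esub>}"
  have Y': "submodule ?Y' R M"
  proof (rule submoduleI)
    show "?Y' \<subseteq> carrier M" using Yc by auto
    show "\<zero>\<^bsub>M\<^esub> \<in> ?Y'" using sub_zero[OF Y] a by simp
    show "\<ominus>\<^bsub>M\<^esub> b \<in> ?Y'" if "b \<in> ?Y'" for b
    proof -
      have b: "b \<in> Y" "a \<odot>\<^bsub>M\<^esub> b = \<zero>\<^bsub>M\<^esub>" using that by auto
      have bc: "b \<in> carrier M" using b Yc by auto
      have "a \<odot>\<^bsub>M\<^esub> (\<ominus>\<^bsub>M\<^esub> b) = \<ominus>\<^bsub>M\<^esub> (a \<odot>\<^bsub>M\<^esub> b)" using smult_r_minus[OF a bc] .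
      thus ?thesis using b sub_neg[OF Y b(1)] by simp
    qed
    show "b \<oplus>\<^bsub>M\<^esub> d \<in> ?Y'" if "b \<in> ?Y'" "d \<in> ?Y'" for b d
    proof -
      have b: "b \<in> Y" "a \<odot>\<^bsub>M\<^esub> b = \<zero>\<^bsub>M\<^esub>" "d \<in> Y" "a \<odot>\<^bsub>M\<^esub> d = \<zero>\<^bsub>M\<^esub>" using that by auto
      have bc: "b \<in> carrier M" "d \<in> carrier M" using b Yc by auto
      have "a \<odot>\<^bsub>M\<^esub> (b \<oplus>\<^bsub>M\<^esub> d) = a \<odot>\<^bsub>M\<^esub> b \<oplus>\<^bsub>M\<^esub> a \<odot>\<^bsub>M\<^esub> d" using smult_r_distr[OF a bc] .
      thus ?thesis using b sub_add[OF Y b(1) b(3)] by simp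
    qed
    show "r \<odot>\<^bsub>M\<^esub> b \<in> ?Y'" if "r \<in> carrier R" "b \<in> ?Y'" for r b
    proof -
      have r: "r \<in> carrier R" and b: "b \<in> Y" "a \<odot>\<^bsub>M\<^esub> b = \<zero>\<^bsub>M\<^esub>" using that by auto
      have bc: "b \<in> carrier M" using b Yc by auto
      have "a \<odot>\<^bsub>M\<^esub> (r \<odot>\<^bsub>M\<^esub> b) = r \<odot>\<^bsub>M\<^esub> (a \<odot>\<^bsub>M\<^esub> b)"
        using smult_assoc1[OF a r bc] smult_assoc1[OF r a bc] R.m_comm[OF a r] by simp
      thus ?thesis using b r sub_smult[OF Y r b(1)] by simp
    qed
  qed
  have "\<forall>y\<in>?Y'. \<forall>b\<in>A. b \<odot>\<^bsub>M\<^esub> y \<in> K" using insert(6) by auto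
  then obtain X' where X': "finite X'" "X' \<subseteq> ?Y'"
    "\<forall>y\<in>?Y'. \<exists>x\<in>gen_submodule R M X'. \<forall>b\<in>A. b \<odot>\<^bsub>M\<^esub> (y \<ominus>\<^bsub>M\<^esub> x) = \<zero>\<^bsub>M\<^esub>"
    using insert.IH[OF Ac Y'] by blast
  have X'c: "X' \<subseteq> carrier M" using X'(2) Yc by auto
  define X where "X = X1 \<union> X'"
  have Xc: "X \<subseteq> carrier M" using X1c X'c unfolding X_def by auto
  have GX1Y: "gen_submodule R M X1 \<subseteq> Y" using gen_min[OF Y X1(1)] .
  have GX'Y': "gen_submodule R M X' \<subseteq> ?Y'" using gen_min[OF Y' X'(2)] .
  have "\<exists>x\<in>gen_submodule R M X. \<forall>b\<in>insert a A. b \<odot>\<^bsub>M\<^esub> (y \<ominus>\<^bsub>M\<^esub> x) = \<zero>\<^bsub>M\<^esub>" if y: "y \<in> Y" for y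
  proof -
    have yc: "y \<in> carrier M" using y Yc by auto
    have "gen_submodule R M Z \<subseteq> (\<lambda>y. a \<odot>\<^bsub>M\<^esub> y) ` gen_submodule R M X1"
      using gen_min[OF image_sub[OF gen_sub[OF X1c] a]] X1(3) gen_incl[of X1] by blast
    moreover have "a \<odot>\<^bsub>M\<^esub> y \<in> gen_submodule R M Z" using Z(3) y by blast
    ultimately obtain z where z: "z \<in> gen_submodule R M X1" "a \<odot>\<^bsub>M\<^esub> y = a \<odot>\<^bsub>M\<^esub> z" by blast
    have zY: "z \<in> Y" using z(1) GX1Y by auto
    have zc: "z \<in> carrier M" using zY Yc by auto
    have "a \<odot>\<^bsub>M\<^esub> (y \<ominus>\<^bsub>M\<^esub> z) = \<zero>\<^bsub>M\<^esub>" using smult_minus[OF a yc zc] z(2) M.r_neg[of "a \<odot>\<^bsub>M\<^esub> z"] a zc by (simp add: a_minus_def)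
    hence yz: "y \<ominus>\<^bsub>M\<^esub> z \<in> ?Y'" using sub_minus[OF Y y zY] by simp
    obtain x' where x': "x' \<in> gen_submodule R M X'" "\<forall>b\<in>A. b \<odot>\<^bsub>M\<^esub> ((y \<ominus>\<^bsub>M\<^esub> z) \<ominus>\<^bsub>M\<^esub> x') = \<zero>\<^bsub>M\<^esub>"
      using X'(3) yz by blast
    have x'Y': "x' \<in> ?Y'" using x'(1) GX'Y' by auto
    have x'c: "x' \<in> carrier M" using x'Y' Yc by auto
    have eq: "y \<ominus>\<^bsub>M\<^esub> (z \<oplus>\<^bsub>M\<^esub> x') = (y \<ominus>\<^bsub>M\<^esub> z) \<ominus>\<^bsub>M\<^esub> x'"
      using yc zc x'c by (simp add: a_minus_def M.minus_add M.a_assoc)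
    have "a \<odot>\<^bsub>M\<^esub> ((y \<ominus>\<^bsub>M\<^esub> z) \<ominus>\<^bsub>M\<^esub> x') = \<zero>\<^bsub>M\<^esub>"
      using smult_minus[OF a _ x'c, of "y \<ominus>\<^bsub>M\<^esub> z"] yz x'Y' yc zc by (simp add: a_minus_def)
    hence all: "\<forall>b\<in>insert a A. b \<odot>\<^bsub>M\<^esub> (y \<ominus>\<^bsub>M\<^esub> (z \<oplus>\<^bsub>M\<^esub> x')) = \<zero>\<^bsub>M\<^esub>" using x'(2) eq by auto
    have "z \<oplus>\<^bsub>M\<^esub> x' \<in> gen_submodule R M X"
      using sub_add[OF gen_sub[OF Xc]] z(1) x'(1) gen_mono[OF Xc, of X1] gen_mono[OF Xc, of X']
      unfolding X_def by blast
    thus ?thesis using all by blast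
  qed
  moreover have "finite X" "X \<subseteq> Y" using X1 X'(1,2) unfolding X_def by auto
  ultimately show ?case by blast
qed

lemma quot_smult:
  assumes K: "submodule K R M" and x: "x \<in> carrier M" and r: "r \<in> carrier R"
  shows "smult (quotient_module R M K) r (K +>\<^bsub>M\<^esub> x) = K +>\<^bsub>M\<^esub> (r \<odot>\<^bsub>M\<^esub> x)"
proof -
  have Kc: "K \<subseteq> carrier M" using sub_carr[OF K] .
  have "set_add M K ((\<lambda>y. r \<odot>\<^bsub>M\<^esub> y) ` (K +>\<^bsub>M\<^esub> x)) = K +>\<^bsub>M\<^esub> (r \<odot>\<^bsub>M\<^esub> x)"
  proof (intro equalityI subsetI)
    fix z assume "z \<in> set_add M K ((\<lambda>y. r \<odot>\<^bsub>M\<^esub> y) ` (K +>\<^bsub>M\<^esub> x))"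
    then obtain k1 k2 where k: "k1 \<in> K" "k2 \<in> K" "z = k1 \<oplus>\<^bsub>M\<^esub> r \<odot>\<^bsub>M\<^esub> (k2 \<oplus>\<^bsub>M\<^esub> x)"
      unfolding set_add_def' a_r_coset_def' by auto
    have kc: "k1 \<in> carrier M" "k2 \<in> carrier M" using k Kc by auto
    have "z = (k1 \<oplus>\<^bsub>M\<^esub> r \<odot>\<^bsub>M\<^esub> k2) \<oplus>\<^bsub>M\<^esub> r \<odot>\<^bsub>M\<^esub> x"
      using k(3) kc x r by (simp add: smult_r_distr M.a_assoc)
    moreover have "k1 \<oplus>\<^bsub>M\<^esub> r \<odot>\<^bsub>M\<^esub> k2 \<in> K" using sub_add[OF K k(1) sub_smult[OF K r k(2)]] .
    ultimately show "z \<in> K +>\<^bsub>M\<^esub> (r \<odot>\<^bsub>M\<^esub> x)" unfolding a_r_coset_def' by blast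
  next
    fix z assume "z \<in> K +>\<^bsub>M\<^esub> (r \<odot>\<^bsub>M\<^esub> x)"
    then obtain k where k: "k \<in> K" "z = k \<oplus>\<^bsub>M\<^esub> r \<odot>\<^bsub>M\<^esub> x" unfolding a_r_coset_def' by auto
    have "\<zero>\<^bsub>M\<^esub> \<oplus>\<^bsub>M\<^esub> x \<in> K +>\<^bsub>M\<^esub> x" using sub_zero[OF K] unfolding a_r_coset_def' by blast
    moreover have "z = k \<oplus>\<^bsub>M\<^esub> r \<odot>\<^bsub>M\<^esub> (\<zero>\<^bsub>M\<^esub> \<oplus>\<^bsub>M\<^esub> x)" using k x by simp
    ultimately show "z \<in> set_add M K ((\<lambda>y. r \<odot>\<^bsub>M\<^esub> y) ` (K +>\<^bsub>M\<^esub> x))"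
      using k(1) unfolding set_add_def' by blast
  qed
  thus ?thesis unfolding quotient_module_def by simp
qed

lemma coset_eq_K:
  assumes K: "submodule K R M" and y: "y \<in> carrier M"
  shows "K +>\<^bsub>M\<^esub> y = K \<longleftrightarrow> y \<in> K"
proof
  assume e: "K +>\<^bsub>M\<^esub> y = K"
  have "\<zero>\<^bsub>M\<^esub> \<oplus>\<^bsub>M\<^esub> y \<in> K +>\<^bsub>M\<^esub> y" using sub_zero[OF K] unfolding a_r_coset_def' by blast
  thus "y \<in> K" using e y by simp
next
  assume yK: "y \<in> K"
  have Kc: "K \<subseteq> carrier M" using sub_carr[OF K] .
  show "K +>\<^bsub>M\<^esub> y = K"
  proof (intro equalityI subsetI)
    fix z assume "z \<in> K +>\<^bsub>M\<^esub> y"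
    thus "z \<in> K" using sub_add[OF K _ yK] unfolding a_r_coset_def' by auto
  next
    fix z assume z: "z \<in> K"
    have "z = (z \<ominus>\<^bsub>M\<^esub> y) \<oplus>\<^bsub>M\<^esub> y" using minus_plus_cancel z yK Kc by (metis subsetD)
    thus "z \<in> K +>\<^bsub>M\<^esub> y" using sub_minus[OF K z yK] unfolding a_r_coset_def' by blast
  qed
qed

lemma Ass_quot:
  assumes K: "submodule K R M"
  shows "Ass R (quotient_module R M K) = {P. primeideal P R \<and> (\<exists>x\<in>carrier M. P = colon R M K x)}"
proof -
  have car: "carrier (quotient_module R M K) = {K +>\<^bsub>M\<^esub> x | x. x \<in> carrier M}"
    unfolding quotient_module_def A_RCOSETS_def' by auto
  have ann: "ann_elem R (quotient_module R M K) (K +>\<^bsub>M\<^esub> x) = colon R M K x" if x: "x \<in> carrier M" for x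
  proof -
    have "smult (quotient_module R M K) r (K +>\<^bsub>M\<^esub> x) = zero (quotient_module R M K) \<longleftrightarrow> r \<odot>\<^bsub>M\<^esub> x \<in> K"
      if r: "r \<in> carrier R" for r
    proof -
      have "smult (quotient_module R M K) r (K +>\<^bsub>M\<^esub> x) = K +>\<^bsub>M\<^esub> (r \<odot>\<^bsub>M\<^esub> x)" using quot_smult[OF K x r] .
      moreover have "zero (quotient_module R M K) = K" unfolding quotient_module_def by simp
      ultimately show ?thesis using coset_eq_K[OF K, of "r \<odot>\<^bsub>M\<^esub> x"] r x by simp
    qed
    thus ?thesis unfolding ann_elem_def colon_def by auto
  qed
  show ?thesis unfolding Ass_def car using ann by auto
qed

end

lemma (in cring) ideal_pow_ideal: "ideal I R \<Longrightarrow> ideal (ideal_pow R I n) R"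
  by (induction n) (auto simp: ideal_pow_def ideals_set_def oneideal ideal_prod_is_ideal)

lemma (in cring) ideal_pow_prime:
  assumes I: "ideal I R" and P: "primeideal P R"
  shows "ideal_pow R I n \<subseteq> P \<Longrightarrow> I \<subseteq> P"
proof (induction n)
  case 0
  hence "carrier R \<subseteq> P" by (simp add: ideal_pow_def ideals_set_def)
  thus ?case using primeideal.I_notcarr[OF P] ideal.Icarr[OF primeideal.axioms(1)[OF P]] by blast
next
  case (Suc n)
  have "ideal_prod R (ideal_pow R I n) I \<subseteq> P" using Suc.prems by (simp add: ideal_pow_def ideals_set_def)
  thus ?case using primeideal_divides_ideal_prod[OF P ideal_pow_ideal[OF I] I] Suc.IH by blast
qed



lemma inv_restrict:
  fixes R :: "('a, 'c) ring_scheme" and M :: "('a, 'b) module"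
  assumes M: "module R M" and N: "submodule N R M" and x: "x \<in> N"
  shows "\<ominus>\<^bsub>M\<lparr>carrier := N\<rparr>\<^esub> x = \<ominus>\<^bsub>M\<^esub> x"
proof -
  have g: "group (add_monoid M)" using abelian_group.a_group module.axioms(2)[OF M] by blast
  have e: "add_monoid (M\<lparr>carrier := N\<rparr>) = (add_monoid M)\<lparr>carrier := N\<rparr>" by simp
  show ?thesis unfolding a_inv_def e
    using group.m_inv_consistent[OF g submodule.axioms(1)[OF N] x] by simp
qed

lemma sub_restrict:
  fixes R :: "('a, 'c) ring_scheme" and M :: "('a, 'b) module"
  assumes M: "module R M" and Nsub: "submodule N R M" and XN: "X \<subseteq> N" and X: "submodule X R M"
  shows "submodule X R (M\<lparr>carrier := N\<rparr>)"
proof -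
  have MN: "module R (M\<lparr>carrier := N\<rparr>)" using submodule.submodule_is_module[OF Nsub M] .
  show ?thesis
  proof (rule module.submoduleI[OF MN])
    show "X \<subseteq> carrier (M\<lparr>carrier := N\<rparr>)" using XN by simp
    show "\<zero>\<^bsub>M\<lparr>carrier := N\<rparr>\<^esub> \<in> X" using mymod.sub_zero[OF _ X] M unfolding mymod_def by simp
    show "\<ominus>\<^bsub>M\<lparr>carrier := N\<rparr>\<^esub> a \<in> X" if "a \<in> X" for a
      using inv_restrict[OF M Nsub, of a] that XN mymod.sub_neg[OF _ X] M unfolding mymod_def by auto
    show "a \<oplus>\<^bsub>M\<lparr>carrier := N\<rparr>\<^esub> b \<in> X" if "a \<in> X" "b \<in> X" for a b
      using that mymod.sub_add[OF _ X] M unfolding mymod_def by simp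
    show "a \<odot>\<^bsub>M\<lparr>carrier := N\<rparr>\<^esub> x \<in> X" if "a \<in> carrier R" "x \<in> X" for a x
      using that mymod.sub_smult[OF _ X] M unfolding mymod_def by simp
  qed
qed

lemma sub_restrict2:
  fixes R :: "('a, 'c) ring_scheme" and M :: "('a, 'b) module"
  assumes M: "module R M" and Nsub: "submodule N R M" and X: "submodule X R (M\<lparr>carrier := N\<rparr>)"
  shows "submodule X R M" "X \<subseteq> N"
proof -
  have MN: "module R (M\<lparr>carrier := N\<rparr>)" using submodule.submodule_is_module[OF Nsub M] .
  have XN: "X \<subseteq> N" using mymod.sub_carr[OF _ X] MN unfolding mymod_def by simp
  thus "X \<subseteq> N" .
  have Nc: "N \<subseteq> carrier M" using mymod.sub_carr[OF _ Nsub] M unfolding mymod_def by simp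
  show "submodule X R M"
  proof (rule module.submoduleI[OF M])
    show "X \<subseteq> carrier M" using XN Nc by auto
    show "\<zero>\<^bsub>M\<^esub> \<in> X" using mymod.sub_zero[OF _ X] MN unfolding mymod_def by simp
    show "\<ominus>\<^bsub>M\<^esub> a \<in> X" if "a \<in> X" for a
    proof -
      have "a \<in> N" using that XN by auto
      hence "\<ominus>\<^bsub>M\<lparr>carrier := N\<rparr>\<^esub> a = \<ominus>\<^bsub>M\<^esub> a" using inv_restrict[OF M Nsub] by blast
      moreover have "\<ominus>\<^bsub>M\<lparr>carrier := N\<rparr>\<^esub> a \<in> X" using mymod.sub_neg[OF _ X that] MN unfolding mymod_def by blast
      ultimately show ?thesis by simp
    qed
    show "a \<oplus>\<^bsub>M\<^esub> b \<in> X" if "a \<in> X" "b \<in> X" for a b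
      using that mymod.sub_add[OF _ X] MN unfolding mymod_def by simp
    show "a \<odot>\<^bsub>M\<^esub> x \<in> X" if "a \<in> carrier R" "x \<in> X" for a x
      using that mymod.sub_smult[OF _ X] MN unfolding mymod_def by simp
  qed
qed

theorem proposition3p14:
  fixes R :: "('a, 'c) ring_scheme" and I :: "'a set"
  assumes "cring R" and "noetherian_ring R" and "ideal I R"
  shows "condition_C R I (fin_weakly_laskerian R :: ('a, 'b) module \<Rightarrow> bool)"
  unfolding condition_C_def
proof (intro allI impI)
  fix M :: "('a, 'b) module"
  assume Mmod: "module R M" and tors: "torsion R M I = carrier M"
    and fwl: "fin_weakly_laskerian R (M\<lparr>carrier := ann_submodule R M I\<rparr>)"
  interpret mymod R M using Mmod unfolding mymod_def .
  have Noe: "noetherian_ring R" by fact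
  have II: "ideal I R" by fact
  have Ic: "I \<subseteq> carrier R" using ideal.Icarr[OF II] by auto
  show "fin_weakly_laskerian R M"
    unfolding fin_weakly_laskerian_def
  proof (intro allI impI)
    fix K assume "fg_submodule R M K"
    then obtain S where S: "finite S" "S \<subseteq> carrier M" "K = gen_submodule R M S"
      unfolding fg_submodule_def by blast
    have Ksub: "submodule K R M" using gen_sub[OF S(2)] S(3) by simp
    have Kc: "K \<subseteq> carrier M" using sub_carr[OF Ksub] .
    let ?N = "ann_submodule R M I"
    have Nsub: "submodule ?N R M"
    proof (rule submoduleI)
      show "?N \<subseteq> carrier M" unfolding ann_submodule_def by auto
      show "\<zero>\<^bsub>M\<^esub> \<in> ?N" unfolding ann_submodule_def using Ic by auto
      show "\<ominus>\<^bsub>M\<^esub> a \<in> ?N" if "a \<in> ?N" for a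
        using that Ic smult_r_minus unfolding ann_submodule_def by auto
      show "a \<oplus>\<^bsub>M\<^esub> b \<in> ?N" if "a \<in> ?N" "b \<in> ?N" for a b
        using that Ic smult_r_distr unfolding ann_submodule_def by auto
      show "r \<odot>\<^bsub>M\<^esub> a \<in> ?N" if "r \<in> carrier R" "a \<in> ?N" for r a
      proof -
        have a: "a \<in> carrier M" "\<forall>s\<in>I. s \<odot>\<^bsub>M\<^esub> a = \<zero>\<^bsub>M\<^esub>" using that unfolding ann_submodule_def by auto
        have "s \<odot>\<^bsub>M\<^esub> (r \<odot>\<^bsub>M\<^esub> a) = \<zero>\<^bsub>M\<^esub>" if s: "s \<in> I" for s
        proof -
          have sc: "s \<in> carrier R" using s Ic by auto
          have "s \<odot>\<^bsub>M\<^esub> (r \<odot>\<^bsub>M\<^esub> a) = r \<odot>\<^bsub>M\<^esub> (s \<odot>\<^bsub>M\<^esub> a)"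
            using smult_assoc1[OF sc \<open>r \<in> carrier R\<close> a(1)] smult_assoc1[OF \<open>r \<in> carrier R\<close> sc a(1)]
              R.m_comm[OF sc \<open>r \<in> carrier R\<close>] by simp
          thus ?thesis using a(2) s \<open>r \<in> carrier R\<close> by simp
        qed
        thus ?thesis using a(1) \<open>r \<in> carrier R\<close> unfolding ann_submodule_def by auto
      qed
    qed
    have Nc: "?N \<subseteq> carrier M" using sub_carr[OF Nsub] .
    let ?U = "set_add M ?N K"
    have Usub: "submodule ?U R M" using sum_sub[OF Nsub Ksub] .
    have KU: "K \<subseteq> ?U" using sum_right[OF Nsub Kc] .
    have NU: "?N \<subseteq> ?U" using sum_left[OF Ksub Nc] .
    let ?L = "{x \<in> carrier M. \<forall>a\<in>I. a \<odot>\<^bsub>M\<^esub> x \<in> K}"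
    have Lsub: "submodule ?L R M"
    proof (rule submoduleI)
      show "?L \<subseteq> carrier M" by auto
      show "\<zero>\<^bsub>M\<^esub> \<in> ?L" using Ic sub_zero[OF Ksub] by auto
      show "\<ominus>\<^bsub>M\<^esub> a \<in> ?L" if "a \<in> ?L" for a
        using that Ic smult_r_minus sub_neg[OF Ksub] by auto
      show "a \<oplus>\<^bsub>M\<^esub> b \<in> ?L" if "a \<in> ?L" "b \<in> ?L" for a b
        using that Ic smult_r_distr sub_add[OF Ksub] by auto
      show "r \<odot>\<^bsub>M\<^esub> a \<in> ?L" if r: "r \<in> carrier R" and "a \<in> ?L" for r a
      proof -
        have a: "a \<in> carrier M" "\<forall>s\<in>I. s \<odot>\<^bsub>M\<^esub> a \<in> K" using that by auto
        have "s \<odot>\<^bsub>M\<^esub> (r \<odot>\<^bsub>M\<^esub> a) \<in> K" if s: "s \<in> I" for s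
        proof -
          have sc: "s \<in> carrier R" using s Ic by auto
          have "s \<odot>\<^bsub>M\<^esub> (r \<odot>\<^bsub>M\<^esub> a) = r \<odot>\<^bsub>M\<^esub> (s \<odot>\<^bsub>M\<^esub> a)"
            using smult_assoc1[OF sc r a(1)] smult_assoc1[OF r sc a(1)] R.m_comm[OF sc r] by simp
          thus ?thesis using a(2) s r sub_smult[OF Ksub] by simp
        qed
        thus ?thesis using a(1) r by auto
      qed
    qed
    obtain A where A: "A \<subseteq> carrier R" "finite A" "I = Idl\<^bsub>R\<^esub> A"
      using noetherian_ring.finetely_gen[OF Noe II] by blast
    have AI: "A \<subseteq> I" using A genideal_self by auto
    have "\<forall>y\<in>?L. \<forall>a\<in>A. a \<odot>\<^bsub>M\<^esub> y \<in> K" using AI by auto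
    then obtain X where X: "finite X" "X \<subseteq> ?L"
      "\<forall>y\<in>?L. \<exists>x\<in>gen_submodule R M X. \<forall>a\<in>A. a \<odot>\<^bsub>M\<^esub> (y \<ominus>\<^bsub>M\<^esub> x) = \<zero>\<^bsub>M\<^esub>"
      using ann_approx[OF Noe Ksub S(1,2) _ A(2,1) Lsub] S(3) by blast
    have Xc: "X \<subseteq> carrier M" using X(2) by auto
    have toN: "z \<in> ?N" if z: "z \<in> carrier M" "\<forall>a\<in>A. a \<odot>\<^bsub>M\<^esub> z = \<zero>\<^bsub>M\<^esub>" for z
    proof -
      have "ideal (colon R M {\<zero>\<^bsub>M\<^esub>} z) R" using col_ideal[OF zero_sub z(1)] .
      moreover have "A \<subseteq> colon R M {\<zero>\<^bsub>M\<^esub>} z" using z(2) A(1) unfolding colon_def by auto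
      ultimately have "I \<subseteq> colon R M {\<zero>\<^bsub>M\<^esub>} z" using A(3) genideal_minimal by blast
      thus ?thesis using z(1) unfolding colon_def ann_submodule_def by auto
    qed
    have LW: "?L \<subseteq> set_add M ?U (gen_submodule R M X)"
    proof
      fix y assume y: "y \<in> ?L"
      then obtain x where x: "x \<in> gen_submodule R M X" "\<forall>a\<in>A. a \<odot>\<^bsub>M\<^esub> (y \<ominus>\<^bsub>M\<^esub> x) = \<zero>\<^bsub>M\<^esub>"
        using X(3) by blast
      have xc: "x \<in> carrier M" using x(1) sub_carr[OF gen_sub[OF Xc]] by auto
      have yc: "y \<in> carrier M" using y by auto
      have "y \<ominus>\<^bsub>M\<^esub> x \<in> ?N" using toN[OF _ x(2)] xc yc by simp
      hence "y \<ominus>\<^bsub>M\<^esub> x \<in> ?U" using NU by auto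
      moreover have "y = (y \<ominus>\<^bsub>M\<^esub> x) \<oplus>\<^bsub>M\<^esub> x" using minus_plus_cancel[OF yc xc] by simp
      ultimately show "y \<in> set_add M ?U (gen_submodule R M X)"
        using x(1) unfolding set_add_def' by blast
    qed
    define Set1 where "Set1 = AssM R M K ?N"
    define Set2 where "Set2 = AssM R M ?U (set_add M ?U (gen_submodule R M X))"
    have f2: "finite Set2" unfolding Set2_def using AssM_finite[OF Noe Usub X(1) Xc] .
    have f1: "finite Set1"
    proof -
      let ?MN = "M\<lparr>carrier := ?N\<rparr>"
      have KN: "submodule (K \<inter> ?N) R M"
        using Ksub Nsub sub_carr[OF Ksub] by (intro submoduleI) (auto intro: sub_zero sub_add sub_neg sub_smult)
      obtain S' where S': "finite S'" "S' \<subseteq> K \<inter> ?N" "K \<inter> ?N = gen_submodule R M S'"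
        using noeth_sub[OF Noe S(1,2) KN] S(3) by blast
      have S'c: "S' \<subseteq> carrier M" using S'(2) Kc by auto
      have "gen_submodule R ?MN S' = gen_submodule R M S'"
      proof
        have "gen_submodule R M S' \<in> {X. submodule X R ?MN \<and> S' \<subseteq> X}"
          using sub_restrict[OF Mmod Nsub _ gen_sub[OF S'c]] S'(3) gen_incl[of S'] by auto
        thus "gen_submodule R ?MN S' \<subseteq> gen_submodule R M S'" unfolding gen_submodule_def[of R ?MN] by blast
        show "gen_submodule R M S' \<subseteq> gen_submodule R ?MN S'"
          unfolding gen_submodule_def using sub_restrict2(1)[OF Mmod Nsub] by blast
      qed
      hence "fg_submodule R ?MN (K \<inter> ?N)" unfolding fg_submodule_def using S' by auto
      hence fin: "finite (Ass R (quotient_module R ?MN (K \<inter> ?N)))" using fwl unfolding fin_weakly_laskerian_def by blast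
      have MNmod: "module R ?MN" using submodule.submodule_is_module[OF Nsub Mmod] .
      interpret MN: mymod R ?MN using MNmod unfolding mymod_def .
      have KNsub: "submodule (K \<inter> ?N) R ?MN" using sub_restrict[OF Mmod Nsub _ KN] by auto
      have eq: "Ass R (quotient_module R ?MN (K \<inter> ?N)) = {P. primeideal P R \<and> (\<exists>x\<in>?N. P = colon R ?MN (K \<inter> ?N) x)}"
        using MN.Ass_quot[OF KNsub] by simp
      have "Set1 \<subseteq> Ass R (quotient_module R ?MN (K \<inter> ?N))"
      proof
        fix P assume "P \<in> Set1"
        then obtain n where P: "primeideal P R" "n \<in> ?N" "P = colon R M K n" unfolding Set1_def AssM_def by auto
        have "colon R ?MN (K \<inter> ?N) n = colon R M K n"
          using P(2) sub_smult[OF Nsub] unfolding colon_def by auto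
        thus "P \<in> Ass R (quotient_module R ?MN (K \<inter> ?N))" using eq P by auto
      qed
      thus ?thesis using fin finite_subset by blast
    qed
    have "Ass R (quotient_module R M K) \<subseteq> Set1 \<union> Set2"
    proof
      fix P assume "P \<in> Ass R (quotient_module R M K)"
      then obtain x where P: "primeideal P R" "x \<in> carrier M" "P = colon R M K x"
        using Ass_quot[OF Ksub] by auto
      obtain n where n: "\<forall>r\<in>ideal_pow R I n. r \<odot>\<^bsub>M\<^esub> x = \<zero>\<^bsub>M\<^esub>"
        using P(2) tors unfolding torsion_def by blast
      have "ideal_pow R I n \<subseteq> P"
      proof
        fix r assume r: "r \<in> ideal_pow R I n"
        have "r \<in> carrier R" using ideal.Icarr[OF ideal_pow_ideal[OF II] r] .
        thus "r \<in> P" using n r sub_zero[OF Ksub] P(3) unfolding colon_def by auto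
      qed
      hence "I \<subseteq> P" using ideal_pow_prime[OF II P(1)] by blast
      hence xL: "x \<in> ?L" using P(2,3) unfolding colon_def by auto
      from col_split[OF Ksub Usub KU P(2,1,3)]
      show "P \<in> Set1 \<union> Set2"
      proof
        assume "\<exists>y\<in>?U. P = colon R M K y"
        then obtain y where y: "y \<in> ?U" "P = colon R M K y" by blast
        then obtain m k where mk: "m \<in> ?N" "k \<in> K" "y = m \<oplus>\<^bsub>M\<^esub> k" unfolding set_add_def' by auto
        have mc: "m \<in> carrier M" "k \<in> carrier M" using mk Nc Kc by auto
        have "y = k \<oplus>\<^bsub>M\<^esub> m" using mk(3) mc M.a_comm by simp
        hence "P = colon R M K m" using y(2) col_shift[OF Ksub mk(2) mc(1)] by simp
        thus ?thesis using P(1) mk(1) unfolding Set1_def AssM_def by auto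
      next
        assume "P = colon R M ?U x"
        thus ?thesis using P(1) xL LW unfolding Set2_def AssM_def by auto
      qed
    qed
    thus "finite (Ass R (quotient_module R M K))" using f1 f2 finite_subset by blast
  qed
qed

end
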